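(* For any suitable parameters $(m,q,d,\tau)$, the shifted projection protocol $\Pi$ is perfectly safe: for every run $\rho$ of $\Pi$, every card $c\in\Omega$ and every agent $P$, $\Pr(c\in H_P\mid\rho)=\tau_P/|\tau|$.
   Context: Agents $\mathcal A=\{A,B_1,\dots,B_m\}$ speak in order $A,B_1,\dots,B_m$. A distribution type is a vector $\tau=(\tau_P)_{P\in\mathcal A}$ of positive integers, $|\tau|=\sum_P\tau_P$; the deck $\Omega$ has $|\tau|$ cards; a deal of type $\tau$ is a partition $H=(H_P)_P$ of $\Omega$ with $|H_P|=\tau_P$. Suitable parameters: $m>1$, $q>m$ a prime power, $d>0$, $|\tau|=q^{d+1}$, $\tau_A=q^{d+1}-q^d$, $\tau_{B_k}>q^{d-1}$ for each $k\in[1,m]$. A transversal hyperplane $V\subseteq\mathbb F_q^{d+1}$ is $\{x: x_{d+1}=a_1x_1+\dots+a_dx_d+b\}$; $\sigma(V)=(a_1,\dots,a_d)$; $\pi$ projects $\mathbb F_q^{d+1}$ onto the first $d$ coordinates; $\pi^V_\downarrow(w)=\pi(w)+\sigma(V)$ for $w\in V$. Shifted projection protocol (tokens: maps $\Omega\to\mathbb F_q^{d+1}$ and subsets of $\mathbb F_q^d$; runs are finite token sequences, $\rho*a$ appends $a$): maximal executions for deal $H$ are $(H,f,X_1,\dots,X_m)$ with $f:\Omega\to\mathbb F_q^{d+1}$ a bijection such that $V=\mathbb F_q^{d+1}\setminus f[H_A]$ is a transversal hyperplane and $X_k=\pi^V_\downarrow[f[H_{B_k}]]$; $\Pi(H,\rho)$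 is the set of tokens $a$ with $(H,\rho*a)$ an initial segment of a maximal execution; an execution is $(H,a_0,\dots,a_n)$ with $a_k\in\Pi(H,a_0,\dots,a_{k-1})$ for all $k$; $\rho$ is a run of $\Pi$ if some $(H,\rho)$ is an execution. Probability model: a deal $H$ is drawn uniformly at random among deals of type $\tau$; then, starting from the empty run, while $\Pi(H,\rho)\neq\emptyset$ for the current run $\rho$, a token is drawn uniformly at random from $\Pi(H,\rho)$ and appended. The event "$\rho$" means the first $|\rho|$ tokens produced are exactly $\rho$. *)

theory Defs
  imports Complex_Main "HOL-Library.Sublist" "HOL-Library.Cardinality"
begin

text \<open>Agents are numbered 0..m: agent 0 is A, agent k (1 \<le> k \<le> m) is B_k.
  A distribution type is tau :: nat => nat (only the values on {0..m} matter).
  Vectors of F_q^n are functions nat => 'f vanishing from index n on;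
  coordinate x_{i+1} of the paper is x i.\<close>

definition vecs :: "nat \<Rightarrow> (nat \<Rightarrow> 'f::zero) set" where
  "vecs n = {x. \<forall>i\<ge>n. x i = 0}"

definition total :: "nat \<Rightarrow> (nat \<Rightarrow> nat) \<Rightarrow> nat" where
  "total m tau = (\<Sum>P\<le>m. tau P)"

definition deck :: "nat \<Rightarrow> (nat \<Rightarrow> nat) \<Rightarrow> nat set" where
  "deck m tau = {..<total m tau}"

definition is_deal :: "nat \<Rightarrow> (nat \<Rightarrow> nat) \<Rightarrow> (nat \<Rightarrow> nat set) \<Rightarrow> bool" where
  "is_deal m tau H \<longleftrightarrow>
     (\<forall>P\<le>m. H P \<subseteq> deck m tau \<and> card (H P) = tau P) \<and>
     (\<forall>P\<le>m. \<forall>Q\<le>m. P \<noteq> Q \<longrightarrow> H P \<inter> H Q = {}) \<and>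
     (\<Union>P\<le>m. H P) = deck m tau \<and>
     (\<forall>P>m. H P = {})"

definition deals :: "nat \<Rightarrow> (nat \<Rightarrow> nat) \<Rightarrow> (nat \<Rightarrow> nat set) set" where
  "deals m tau = {H. is_deal m tau H}"

definition hyperplane :: "nat \<Rightarrow> (nat \<Rightarrow> 'f::field) \<Rightarrow> 'f \<Rightarrow> (nat \<Rightarrow> 'f) set" where
  "hyperplane d a b = {x \<in> vecs (Suc d). x d = (\<Sum>i<d. a i * x i) + b}"

definition transversal_hyperplane :: "nat \<Rightarrow> (nat \<Rightarrow> 'f::field) set \<Rightarrow> bool" where
  "transversal_hyperplane d V \<longleftrightarrow> (\<exists>a\<in>vecs d. \<exists>b. V = hyperplane d a b)"

definition sigma :: "nat \<Rightarrow> (nat \<Rightarrow> 'f::field) set \<Rightarrow> nat \<Rightarrow> 'f" where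
  "sigma d V = (THE a. a \<in> vecs d \<and> (\<exists>b. V = hyperplane d a b))"

definition proj :: "nat \<Rightarrow> (nat \<Rightarrow> 'f::zero) \<Rightarrow> nat \<Rightarrow> 'f" where
  "proj d w = (\<lambda>i. if i < d then w i else 0)"

definition proj_down :: "nat \<Rightarrow> (nat \<Rightarrow> 'f::field) set \<Rightarrow> (nat \<Rightarrow> 'f) \<Rightarrow> nat \<Rightarrow> 'f" where
  "proj_down d V w = (\<lambda>i. proj d w i + sigma d V i)"

text \<open>Tokens: maps from the deck to F_q^{d+1} (represented extensionally,
  i.e. constant 0 outside the deck) and subsets of F_q^d.\<close>
datatype 'f token = TMap "nat \<Rightarrow> nat \<Rightarrow> 'f" | TSet "(nat \<Rightarrow> 'f) set"

definition max_execs :: "nat \<Rightarrow> nat \<Rightarrow> (nat \<Rightarrow> nat) \<Rightarrow> (nat \<Rightarrow> nat set) \<Rightarrow> 'f::field token list set" where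
  "max_execs d m tau H =
     {TMap f # map (\<lambda>k. TSet (proj_down d (vecs (Suc d) - f ` H 0) ` (f ` H k))) [1..<Suc m] | f.
        bij_betw f (deck m tau) (vecs (Suc d)) \<and>
        (\<forall>c. c \<notin> deck m tau \<longrightarrow> f c = (\<lambda>_. 0)) \<and>
        transversal_hyperplane d (vecs (Suc d) - f ` H 0)}"

definition Pi_prot :: "nat \<Rightarrow> nat \<Rightarrow> (nat \<Rightarrow> nat) \<Rightarrow> (nat \<Rightarrow> nat set) \<Rightarrow> 'f::field token list \<Rightarrow> 'f token set" where
  "Pi_prot d m tau H \<rho> = {a. \<exists>e\<in>max_execs d m tau H. prefix (\<rho> @ [a]) e}"

definition is_execution :: "nat \<Rightarrow> nat \<Rightarrow> (nat \<Rightarrow> nat) \<Rightarrow> (nat \<Rightarrow> nat set) \<Rightarrow> 'f::field token list \<Rightarrow> bool" where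
  "is_execution d m tau H \<rho> \<longleftrightarrow>
     is_deal m tau H \<and> (\<forall>k<length \<rho>. \<rho> ! k \<in> Pi_prot d m tau H (take k \<rho>))"

definition is_run :: "nat \<Rightarrow> nat \<Rightarrow> (nat \<Rightarrow> nat) \<Rightarrow> 'f::field token list \<Rightarrow> bool" where
  "is_run d m tau \<rho> \<longleftrightarrow> (\<exists>H. is_execution d m tau H \<rho>)"

text \<open>Probability, given deal H, that the first |rho| tokens produced are exactly rho
  (each token drawn uniformly from Pi(H, current run), stopping when Pi is empty).\<close>
definition run_prob :: "nat \<Rightarrow> nat \<Rightarrow> (nat \<Rightarrow> nat) \<Rightarrow> (nat \<Rightarrow> nat set) \<Rightarrow> 'f::field token list \<Rightarrow> real" where
  "run_prob d m tau H \<rho> =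
     (\<Prod>k<length \<rho>. if \<rho> ! k \<in> Pi_prot d m tau H (take k \<rho>)
                      then 1 / real (card (Pi_prot d m tau H (take k \<rho>))) else 0)"

text \<open>Pr(E(H) and rho), with H uniform over deals of type tau.\<close>
definition prob_event :: "nat \<Rightarrow> nat \<Rightarrow> (nat \<Rightarrow> nat) \<Rightarrow> ((nat \<Rightarrow> nat set) \<Rightarrow> bool) \<Rightarrow> 'f::field token list \<Rightarrow> real" where
  "prob_event d m tau E \<rho> =
     (\<Sum>H\<in>deals m tau. if E H then run_prob d m tau H \<rho> else 0) / real (card (deals m tau))"

definition cond_prob :: "nat \<Rightarrow> nat \<Rightarrow> (nat \<Rightarrow> nat) \<Rightarrow> ((nat \<Rightarrow> nat set) \<Rightarrow> bool) \<Rightarrow> 'f::field token list \<Rightarrow> real" where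
  "cond_prob d m tau E \<rho> = prob_event d m tau E \<rho> / prob_event d m tau (\<lambda>_. True) \<rho>"

end

theory Submission imports Defs "HOL-Library.FuncSet" begin


lemma finite_funs:
  assumes "finite I" "\<And>i. i \<in> I \<Longrightarrow> finite (S i)"
  shows "finite {f. (\<forall>i\<in>I. f i \<in> S i) \<and> (\<forall>i. i \<notin> I \<longrightarrow> f i = k)}"
proof -
  have "{f. (\<forall>i\<in>I. f i \<in> S i) \<and> (\<forall>i. i \<notin> I \<longrightarrow> f i = k)}
        \<subseteq> (\<lambda>g i. if i \<in> I then g i else k) ` (PiE I S)"
  proof
    fix f assume f: "f \<in> {f. (\<forall>i\<in>I. f i \<in> S i) \<and> (\<forall>i. i \<notin> I \<longrightarrow> f i = k)}"
    show "f \<in> (\<lambda>g i. if i \<in> I then g i else k) ` (PiE I S)"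
      by (rule image_eqI[where x="restrict f I"]) (use f in auto)
  qed
  moreover have "finite (PiE I S)" using assms by (rule finite_PiE)
  ultimately show ?thesis by (meson finite_surj)
qed

lemma finite_vecs: "finite (vecs n :: (nat \<Rightarrow> 'f::{finite,zero}) set)"
proof -
  have "vecs n = {x :: nat \<Rightarrow> 'f. (\<forall>i\<in>{..<n}. x i \<in> UNIV) \<and> (\<forall>i. i \<notin> {..<n} \<longrightarrow> x i = 0)}"
    unfolding vecs_def by auto
  thus ?thesis using finite_funs[of "{..<n}" "\<lambda>_. UNIV :: 'f set" 0] by simp
qed

definition Valid :: "nat \<Rightarrow> nat \<Rightarrow> (nat \<Rightarrow> nat) \<Rightarrow> (nat \<Rightarrow> nat set) \<Rightarrow> (nat \<Rightarrow> nat \<Rightarrow> 'f::field) set" where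
  "Valid d m tau H = {f. bij_betw f (deck m tau) (vecs (Suc d)) \<and>
        (\<forall>c. c \<notin> deck m tau \<longrightarrow> f c = (\<lambda>_. 0)) \<and>
        transversal_hyperplane d (vecs (Suc d) - f ` H 0)}"

definition exec :: "nat \<Rightarrow> nat \<Rightarrow> (nat \<Rightarrow> nat set) \<Rightarrow> (nat \<Rightarrow> nat \<Rightarrow> 'f::field) \<Rightarrow> 'f token list" where
  "exec d m H f = TMap f # map (\<lambda>k. TSet (proj_down d (vecs (Suc d) - f ` H 0) ` (f ` H k))) [1..<Suc m]"

lemma max_execs_eq: "max_execs d m tau H = exec d m H ` Valid d m tau H"
  unfolding max_execs_def exec_def Valid_def by auto

lemma finite_Valid: "finite (Valid d m tau H :: (nat \<Rightarrow> nat \<Rightarrow> 'f::{finite,field}) set)"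
proof -
  have "Valid d m tau H \<subseteq> {f :: nat \<Rightarrow> nat \<Rightarrow> 'f. (\<forall>i\<in>deck m tau. f i \<in> vecs (Suc d)) \<and> (\<forall>i. i \<notin> deck m tau \<longrightarrow> f i = (\<lambda>_. 0))}"
    unfolding Valid_def by (auto dest: bij_betwE)
  moreover have "finite {f :: nat \<Rightarrow> nat \<Rightarrow> 'f. (\<forall>i\<in>deck m tau. f i \<in> vecs (Suc d)) \<and> (\<forall>i. i \<notin> deck m tau \<longrightarrow> f i = (\<lambda>_. 0))}"
    by (rule finite_funs) (auto simp: deck_def finite_vecs)
  ultimately show ?thesis by (rule finite_subset)
qed

lemma finite_deals: "finite (deals m tau)"
proof -
  have "deals m tau \<subseteq> {H. (\<forall>i\<in>{..m}. H i \<in> Pow (deck m tau)) \<and> (\<forall>i. i \<notin> {..m} \<longrightarrow> H i = {})}"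
    unfolding deals_def is_deal_def by auto
  moreover have "finite {H. (\<forall>i\<in>{..m}. H i \<in> Pow (deck m tau)) \<and> (\<forall>i. i \<notin> {..m} \<longrightarrow> H i = {})}"
    by (rule finite_funs) (auto simp: deck_def)
  ultimately show ?thesis by (rule finite_subset)
qed

lemma Pi_nil: "Pi_prot d m tau H [] = TMap ` Valid d m tau H"
  unfolding Pi_prot_def max_execs_eq exec_def by auto

lemma Pi_cons: "Pi_prot d m tau H (TMap f # s) =
   {a. f \<in> Valid d m tau H \<and> prefix (TMap f # s @ [a]) (exec d m H f)}"
  unfolding Pi_prot_def max_execs_eq by (auto simp: exec_def)

lemma prefix_iff_take: "prefix zs ys \<longleftrightarrow> length zs \<le> length ys \<and> take (length zs) ys = zs"
proof
  assume "prefix zs ys" then show "length zs \<le> length ys \<and> take (length zs) ys = zs"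
    by (auto simp: prefix_def)
next
  assume "length zs \<le> length ys \<and> take (length zs) ys = zs"
  then show "prefix zs ys" by (metis append_take_drop_id prefix_def)
qed

lemma prefix_take_snoc:
  assumes "prefix xs ys" "j < length xs"
  shows "prefix (take j xs @ [a]) ys \<longleftrightarrow> a = xs ! j"
proof -
  obtain z where ys: "ys = xs @ z" using assms(1) by (auto simp: prefix_def)
  have len: "length (take j xs @ [a]) = Suc j" using assms(2) by simp
  have "take (Suc j) ys = take j xs @ [xs ! j]" using assms(2) ys by (simp add: take_Suc_conv_app_nth)
  then show ?thesis unfolding prefix_iff_take len using assms(2) ys by auto
qed

lemma run_prob_TMap:
  fixes f :: "nat \<Rightarrow> nat \<Rightarrow> 'f::field"
  shows "run_prob d m tau H (TMap f # rest) =
    (if f \<in> Valid d m tau H \<and> prefix (TMap f # rest) (exec d m H f)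
     then 1 / real (card (Valid d m tau H :: (nat \<Rightarrow> nat \<Rightarrow> 'f) set)) else 0)"
proof -
  let ?r = "TMap f # rest"
  let ?V = "Valid d m tau H :: (nat \<Rightarrow> nat \<Rightarrow> 'f) set"
  let ?e = "exec d m H f"
  define F where "F k = (if ?r ! k \<in> Pi_prot d m tau H (take k ?r)
                      then 1 / real (card (Pi_prot d m tau H (take k ?r))) else 0)" for k
  have rp: "run_prob d m tau H ?r = F 0 * (\<Prod>k<length rest. F (Suc k))"
    unfolding run_prob_def F_def[symmetric] length_Cons by (rule prod.lessThan_Suc_shift)
  have cardT: "card (TMap ` ?V) = card ?V" using card_image[of TMap ?V] by (simp add: inj_on_def)
  have F0: "F 0 = (if f \<in> ?V then 1 / real (card ?V) else 0)"
    unfolding F_def by (auto simp: Pi_nil cardT)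
  have FS: "F (Suc k) = (if rest ! k \<in> {a. f \<in> ?V \<and> prefix (TMap f # take k rest @ [a]) ?e}
     then 1 / real (card {a. f \<in> ?V \<and> prefix (TMap f # take k rest @ [a]) ?e}) else 0)" for k
    unfolding F_def by (simp add: Pi_cons)
  show ?thesis
  proof (cases "f \<in> ?V")
    case False
    then show ?thesis using rp F0 by simp
  next
    case fV: True
    show ?thesis
    proof (cases "prefix ?r ?e")
      case True
      have "F (Suc k) = 1" if "k < length rest" for k
      proof -
        have "{a. prefix (TMap f # take k rest @ [a]) ?e} = {rest ! k}"
          using prefix_take_snoc[OF True, of "Suc k"] that by auto
        then show ?thesis using FS[of k] fV by simp
      qed
      then have "(\<Prod>k<length rest. F (Suc k)) = 1" by simp
      then show ?thesis using rp F0 fV True by simp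
    next
      case False
      have "rest \<noteq> []"
      proof
        assume "rest = []"
        then have "prefix ?r ?e" by (simp add: exec_def)
        with False show False by simp
      qed
      then obtain n where n: "length rest = Suc n" by (cases rest) auto
      have "TMap f # take n rest @ [rest ! n] = ?r"
        using n by (metis append_Cons lessI take_Suc_conv_app_nth take_all order_refl)
      then have "F (Suc n) = 0" using FS[of n] False by auto
      then have "(\<Prod>k<length rest. F (Suc k)) = 0" using n by (intro prod_zero) auto
      then show ?thesis using rp False by simp
    qed
  qed
qed




definition dot :: "nat \<Rightarrow> (nat \<Rightarrow> 'f::field) \<Rightarrow> (nat \<Rightarrow> 'f) \<Rightarrow> 'f" where
  "dot d a x = (\<Sum>i<d. a i * x i)"

definition Tm :: "nat \<Rightarrow> (nat \<Rightarrow> 'f::field) \<Rightarrow> 'f \<Rightarrow> (nat \<Rightarrow> 'f) \<Rightarrow> (nat \<Rightarrow> 'f)" where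
  "Tm d u s w = (\<lambda>i. if i < d then w i - u i else if i = d then w d + dot d u w + s else 0)"

lemma hyperplane_dot: "hyperplane d a b = {x \<in> vecs (Suc d). x d = dot d a x + b}"
  unfolding hyperplane_def dot_def by simp

lemma dot_add_left: "dot d (\<lambda>i. a i + u i) x = dot d a x + dot d u x"
  unfolding dot_def by (simp add: distrib_right sum.distrib)

lemma dot_neg_right: "dot d a (\<lambda>i. - u i) = - dot d a u"
  unfolding dot_def by (simp add: sum_negf)

lemma dot_Tm: "dot d a (Tm d u s w) = dot d a w - dot d a u"
proof -
  have "dot d a (Tm d u s w) = (\<Sum>i<d. a i * w i - a i * u i)"
    unfolding dot_def Tm_def by (intro sum.cong) (auto simp: right_diff_distrib)
  then show ?thesis unfolding dot_def by (simp add: sum_subtractf)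
qed

lemma Tm_vecs: "w \<in> vecs (Suc d) \<Longrightarrow> Tm d u s w \<in> vecs (Suc d)"
  unfolding vecs_def Tm_def by auto

lemma Tm_inv1:
  assumes "z \<in> vecs (Suc d)"
  shows "Tm d u s (Tm d (\<lambda>i. - u i) (- s - dot d u u) z) = z"
proof
  fix i
  have dt: "dot d u (Tm d (\<lambda>i. - u i) (- s - dot d u u) z) = dot d u z + dot d u u"
    using dot_Tm[of d u "\<lambda>i. - u i" "- s - dot d u u" z] dot_neg_right[of d u u] by simp
  have dt2: "dot d (\<lambda>i. - u i) z = - dot d u z"
    unfolding dot_def by (simp add: sum_negf)
  show "Tm d u s (Tm d (\<lambda>i. - u i) (- s - dot d u u) z) i = z i"
    using assms dt dt2 unfolding vecs_def
    by (cases "i < d"; cases "i = d") (auto simp: Tm_def[of d u s] Tm_def[of d "\<lambda>i. - u i"])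
qed

lemma Tm_inv2:
  assumes "z \<in> vecs (Suc d)"
  shows "Tm d (\<lambda>i. - u i) (- s - dot d u u) (Tm d u s z) = z"
proof
  fix i
  have dt: "dot d (\<lambda>i. - u i) (Tm d u s z) = - dot d u z + dot d u u"
    using dot_Tm[of d "\<lambda>i. - u i" u s z] dot_neg_right[of d u u]
    unfolding dot_def by (simp add: sum_negf)
  show "Tm d (\<lambda>i. - u i) (- s - dot d u u) (Tm d u s z) i = z i"
    using assms dt unfolding vecs_def
    by (cases "i < d"; cases "i = d") (auto simp: Tm_def[of d u s] Tm_def[of d "\<lambda>i. - u i"])
qed

lemma Tm_bij: "bij_betw (Tm d u s) (vecs (Suc d)) (vecs (Suc d))"
  by (rule bij_betw_byWitness[where f'="Tm d (\<lambda>i. - u i) (- s - dot d u u)"])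
     (auto simp: Tm_inv1 Tm_inv2 Tm_vecs)

lemma Tm_hyper_sub:
  "Tm d u s ` hyperplane d a b \<subseteq> hyperplane d (\<lambda>i. a i + u i) (dot d (\<lambda>i. a i + u i) u + b + s)"
proof
  fix z assume "z \<in> Tm d u s ` hyperplane d a b"
  then obtain w where w: "w \<in> vecs (Suc d)" "w d = dot d a w + b" and z: "z = Tm d u s w"
    unfolding hyperplane_dot by auto
  have "z d = w d + dot d u w + s" unfolding z Tm_def by simp
  moreover have "dot d (\<lambda>i. a i + u i) z = dot d a w + dot d u w - dot d (\<lambda>i. a i + u i) u"
    unfolding z dot_Tm dot_add_left by (simp add: algebra_simps)
  ultimately have "z d = dot d (\<lambda>i. a i + u i) z + (dot d (\<lambda>i. a i + u i) u + b + s)"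
    using w(2) by (simp add: algebra_simps)
  then show "z \<in> hyperplane d (\<lambda>i. a i + u i) (dot d (\<lambda>i. a i + u i) u + b + s)"
    unfolding hyperplane_dot using Tm_vecs[OF w(1)] z by simp
qed

lemma hyperplane_vecs: "hyperplane d a b \<subseteq> vecs (Suc d)"
  unfolding hyperplane_def by auto

lemma Tm_hyper:
  "Tm d u s ` hyperplane d a b = hyperplane d (\<lambda>i. a i + u i) (dot d (\<lambda>i. a i + u i) u + b + s)"
proof
  show "Tm d u s ` hyperplane d a b \<subseteq> hyperplane d (\<lambda>i. a i + u i) (dot d (\<lambda>i. a i + u i) u + b + s)"
    by (rule Tm_hyper_sub)
next
  let ?a = "\<lambda>i. a i + u i" and ?b = "dot d (\<lambda>i. a i + u i) u + b + s"
  let ?T' = "Tm d (\<lambda>i. - u i) (- s - dot d u u)"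
  show "hyperplane d ?a ?b \<subseteq> Tm d u s ` hyperplane d a b"
  proof
    fix z assume z: "z \<in> hyperplane d ?a ?b"
    have "?T' z \<in> hyperplane d (\<lambda>i. ?a i + - u i) (dot d (\<lambda>i. ?a i + - u i) (\<lambda>i. - u i) + ?b + (- s - dot d u u))"
      using Tm_hyper_sub[of d "\<lambda>i. - u i" "- s - dot d u u" ?a ?b] z by auto
    moreover have "(\<lambda>i. ?a i + - u i) = a" by simp
    moreover have "dot d a (\<lambda>i. - u i) + ?b + (- s - dot d u u) = b"
      using dot_neg_right[of d a u] dot_add_left[of d a u u] by simp
    ultimately have "?T' z \<in> hyperplane d a b" by simp
    moreover have "Tm d u s (?T' z) = z" using z hyperplane_vecs by (intro Tm_inv1) auto
    ultimately show "z \<in> Tm d u s ` hyperplane d a b" by (metis image_eqI)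
  qed
qed




lemma hyper_inj:
  fixes a a' :: "nat \<Rightarrow> 'f::field"
  assumes a: "a \<in> vecs d" and a': "a' \<in> vecs d"
    and eq: "hyperplane d a b = hyperplane d a' b'"
  shows "a = a'"
proof -
  define z0 where "z0 = (\<lambda>i. if i = d then b else (0::'f))"
  have "dot d a z0 = 0" "dot d a' z0 = 0" unfolding dot_def z0_def by auto
  moreover have "z0 \<in> vecs (Suc d)" unfolding vecs_def z0_def by auto
  ultimately have "z0 \<in> hyperplane d a b" unfolding hyperplane_dot z0_def by simp
  then have "z0 \<in> hyperplane d a' b'" using eq by simp
  then have bb: "b = b'" using \<open>dot d a' z0 = 0\<close> unfolding hyperplane_dot z0_def by simp
  show ?thesis
  proof
    fix j
    show "a j = a' j"
    proof (cases "j < d")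
      case False then show ?thesis using a a' unfolding vecs_def by auto
    next
      case True
      define e where "e = (\<lambda>i. if i = j then 1 else if i = d then a j + b else (0::'f))"
      have de: "dot d c e = c j" for c
      proof -
        have "dot d c e = (\<Sum>i<d. if i = j then c i else 0)"
          unfolding dot_def e_def by (intro sum.cong) auto
        then show ?thesis using True by simp
      qed
      have "e \<in> vecs (Suc d)" unfolding vecs_def e_def using True by auto
      moreover have "e d = a j + b" unfolding e_def using True by simp
      ultimately have "e \<in> hyperplane d a b" unfolding hyperplane_dot using de[of a] by simp
      then have "e \<in> hyperplane d a' b'" using eq by simp
      then have "a j + b = a' j + b'" unfolding hyperplane_dot using de[of a']  \<open>e d = a j + b\<close> by simp
      then show ?thesis using bb by simp
    qed
  qed
qed

lemma sigma_hyper: "(a :: nat \<Rightarrow> 'f::field) \<in> vecs d \<Longrightarrow> sigma d (hyperplane d a b) = a"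
  unfolding sigma_def by (rule the_equality) (auto dest: hyper_inj)

lemma add_vecs: "(a :: nat \<Rightarrow> 'f::field) \<in> vecs d \<Longrightarrow> u \<in> vecs d \<Longrightarrow> (\<lambda>i. a i + u i) \<in> vecs d"
  unfolding vecs_def by auto

lemma neg_vecs: "(u :: nat \<Rightarrow> 'f::field) \<in> vecs d \<Longrightarrow> (\<lambda>i. - u i) \<in> vecs d"
  unfolding vecs_def by auto

lemma transversal_Tm:
  "u \<in> vecs d \<Longrightarrow> transversal_hyperplane d V \<Longrightarrow> transversal_hyperplane d (Tm d u s ` V)"
proof -
  assume u: "u \<in> vecs d" and "transversal_hyperplane d V"
  then obtain a b where a: "a \<in> vecs d" and V: "V = hyperplane d a b"
    unfolding transversal_hyperplane_def by blast
  have "Tm d u s ` V = hyperplane d (\<lambda>i. a i + u i) (dot d (\<lambda>i. a i + u i) u + b + s)"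
    unfolding V by (rule Tm_hyper)
  then show ?thesis unfolding transversal_hyperplane_def using add_vecs[OF a u] by blast
qed

lemma transversal_Tm_iff:
  assumes u: "u \<in> vecs d" and V: "V \<subseteq> vecs (Suc d)"
  shows "transversal_hyperplane d (Tm d u s ` V) \<longleftrightarrow> transversal_hyperplane d V"
proof (rule iffI)
  assume "transversal_hyperplane d (Tm d u s ` V)"
  then have "transversal_hyperplane d (Tm d (\<lambda>i. - u i) (- s - dot d u u) ` Tm d u s ` V)"
    by (rule transversal_Tm[OF neg_vecs[OF u]])
  moreover have "Tm d (\<lambda>i. - u i) (- s - dot d u u) ` Tm d u s ` V = V"
  proof -
    have "Tm d (\<lambda>i. - u i) (- s - dot d u u) ` Tm d u s ` V = (\<lambda>x. Tm d (\<lambda>i. - u i) (- s - dot d u u) (Tm d u s x)) ` V"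
      by (simp add: image_image)
    also have "\<dots> = id ` V"
    proof (rule image_cong[OF refl])
      fix x assume "x \<in> V"
      then have "x \<in> vecs (Suc d)" using V by blast
      then show "Tm d (\<lambda>i. - u i) (- s - dot d u u) (Tm d u s x) = id x" by (simp add: Tm_inv2)
    qed
    finally show ?thesis by simp
  qed
  ultimately show "transversal_hyperplane d V" by simp
next
  assume "transversal_hyperplane d V"
  then show "transversal_hyperplane d (Tm d u s ` V)" using u by (rule transversal_Tm[rotated])
qed

lemma proj_down_Tm:
  assumes u: "u \<in> vecs d" and V: "transversal_hyperplane d V" and w: "w \<in> V"
  shows "proj_down d (Tm d u s ` V) (Tm d u s w) = proj_down d V w"
proof -
  obtain a b where a: "a \<in> vecs d" and Vd: "V = hyperplane d a b"
    using V unfolding transversal_hyperplane_def by auto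
  have s1: "sigma d V = a" using Vd sigma_hyper[OF a] by simp
  have s2: "sigma d (Tm d u s ` V) = (\<lambda>i. a i + u i)"
    unfolding Vd Tm_hyper by (rule sigma_hyper) (rule add_vecs[OF a u])
  show ?thesis
  proof
    fix i
    show "proj_down d (Tm d u s ` V) (Tm d u s w) i = proj_down d V w i"
      using a u unfolding proj_down_def s1 s2 proj_def Tm_def vecs_def by auto
  qed
qed

lemma Tm_trans:
  assumes "p \<in> vecs (Suc d)" "p' \<in> vecs (Suc d)"
  shows "\<exists>u\<in>vecs d. \<exists>s. Tm d u s p = (p' :: nat \<Rightarrow> 'f::field)"
proof -
  define u where "u = (\<lambda>i. if i < d then p i - p' i else 0)"
  define s where "s = p' d - p d - dot d u p"
  have "u \<in> vecs d" unfolding u_def vecs_def by auto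
  moreover have "Tm d u s p = p'"
  proof
    fix i show "Tm d u s p i = p' i"
      using assms unfolding Tm_def u_def s_def vecs_def by auto
  qed
  ultimately show ?thesis by blast
qed




definition act :: "(nat \<Rightarrow> nat) \<Rightarrow> (nat \<Rightarrow> nat set) \<Rightarrow> nat \<Rightarrow> nat set" where
  "act g H = (\<lambda>P. g ` H P)"

lemma deal_sub: "is_deal m tau H \<Longrightarrow> H P \<subseteq> deck m tau"
  unfolding is_deal_def by (cases "P \<le> m") auto

lemma deal_act:
  assumes g: "bij_betw g (deck m tau) (deck m tau)" and H: "is_deal m tau H"
  shows "is_deal m tau (act g H)"
proof -
  have inj: "inj_on g (deck m tau)" using g by (rule bij_betw_imp_inj_on)
  have sub: "H P \<subseteq> deck m tau" for P using H by (rule deal_sub)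
  have "\<forall>P\<le>m. g ` H P \<subseteq> deck m tau \<and> card (g ` H P) = tau P"
  proof (intro allI impI conjI)
    fix P assume "P \<le> m"
    show "g ` H P \<subseteq> deck m tau" using sub[of P] g bij_betw_imp_surj_on by blast
    have "card (g ` H P) = card (H P)" using inj sub[of P] by (meson card_image inj_on_subset)
    then show "card (g ` H P) = tau P" using H \<open>P \<le> m\<close> unfolding is_deal_def by auto
  qed
  moreover have "\<forall>P\<le>m. \<forall>Q\<le>m. P \<noteq> Q \<longrightarrow> g ` H P \<inter> g ` H Q = {}"
  proof (intro allI impI)
    fix P Q assume "P \<le> m" "Q \<le> m" "P \<noteq> Q"
    then have "H P \<inter> H Q = {}" using H unfolding is_deal_def by auto
    then show "g ` H P \<inter> g ` H Q = {}" using inj sub[of P] sub[of Q]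
      by (metis inj_on_image_Int image_empty)
  qed
  moreover have "(\<Union>P\<le>m. g ` H P) = deck m tau"
  proof -
    have "(\<Union>P\<le>m. g ` H P) = g ` (\<Union>P\<le>m. H P)" by auto
    also have "\<dots> = g ` deck m tau" using H unfolding is_deal_def by simp
    also have "\<dots> = deck m tau" using g by (simp add: bij_betw_def)
    finally show ?thesis .
  qed
  moreover have "\<forall>P>m. g ` H P = {}" using H unfolding is_deal_def by auto
  ultimately show ?thesis unfolding is_deal_def act_def by simp
qed

lemma act_inv:
  assumes g: "bij_betw g (deck m tau) (deck m tau)" and H: "is_deal m tau H"
  shows "act (inv_into (deck m tau) g) (act g H) = H"
proof
  fix P
  have "H P \<subseteq> deck m tau" using H by (rule deal_sub)
  then show "act (inv_into (deck m tau) g) (act g H) P = H P"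
    unfolding act_def using g by (simp add: bij_betw_def inv_into_image_cancel)
qed

lemma act_bij:
  assumes g: "bij_betw g (deck m tau) (deck m tau)"
  shows "bij_betw (act g) (deals m tau) (deals m tau)"
proof -
  have gi: "bij_betw (inv_into (deck m tau) g) (deck m tau) (deck m tau)"
    using g by (rule bij_betw_inv_into)
  have gg: "inv_into (deck m tau) (inv_into (deck m tau) g) x = g x" if "x \<in> deck m tau" for x
  proof (rule inv_into_f_eq)
    show "inj_on (inv_into (deck m tau) g) (deck m tau)" using gi by (rule bij_betw_imp_inj_on)
    show "g x \<in> deck m tau" using g that by (meson bij_betwE)
    show "inv_into (deck m tau) g (g x) = x" using g that by (meson bij_betw_inv_into_left)
  qed
  have ag: "act (inv_into (deck m tau) (inv_into (deck m tau) g)) H = act g H" if "is_deal m tau H" for H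
  proof
    fix P show "act (inv_into (deck m tau) (inv_into (deck m tau) g)) H P = act g H P"
      unfolding act_def using deal_sub[OF that, of P] gg by (intro image_cong[OF refl]) auto
  qed
  show ?thesis
  proof (rule bij_betw_byWitness[where f'="act (inv_into (deck m tau) g)"])
    show "\<forall>a\<in>deals m tau. act (inv_into (deck m tau) g) (act g a) = a"
      unfolding deals_def using act_inv[OF g] by auto
    show "\<forall>a'\<in>deals m tau. act g (act (inv_into (deck m tau) g) a') = a'"
    proof
      fix a' assume "a' \<in> deals m tau"
      then have a': "is_deal m tau a'" unfolding deals_def by simp
      have "act g (act (inv_into (deck m tau) g) a')
          = act (inv_into (deck m tau) (inv_into (deck m tau) g)) (act (inv_into (deck m tau) g) a')"
        using ag[OF deal_act[OF gi a']] by simp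
      also have "\<dots> = a'" using act_inv[OF gi a'] .
      finally show "act g (act (inv_into (deck m tau) g) a') = a'" .
    qed
    show "act g ` deals m tau \<subseteq> deals m tau"
      unfolding deals_def using deal_act[OF g] by auto
    show "act (inv_into (deck m tau) g) ` deals m tau \<subseteq> deals m tau"
      unfolding deals_def using deal_act[OF gi] by auto
  qed
qed

lemma card_Valid_act:
  assumes g: "bij_betw g (deck m tau) (deck m tau)" and H0: "H 0 \<subseteq> deck m tau"
  shows "card (Valid d m tau (act g H) :: (nat \<Rightarrow> nat \<Rightarrow> 'f::field) set)
       = card (Valid d m tau H :: (nat \<Rightarrow> nat \<Rightarrow> 'f) set)"
proof -
  let ?D = "deck m tau"
  let ?V1 = "Valid d m tau H :: (nat \<Rightarrow> nat \<Rightarrow> 'f) set"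
  let ?V2 = "Valid d m tau (act g H) :: (nat \<Rightarrow> nat \<Rightarrow> 'f) set"
  let ?gi = "inv_into ?D g"
  have gi: "bij_betw ?gi ?D ?D" using g by (rule bij_betw_inv_into)
  define Phi :: "(nat \<Rightarrow> nat \<Rightarrow> 'f) \<Rightarrow> (nat \<Rightarrow> nat \<Rightarrow> 'f)"
    where "Phi f' = (\<lambda>c. if c \<in> ?D then f' (?gi c) else (\<lambda>_. 0))" for f'
  define Psi :: "(nat \<Rightarrow> nat \<Rightarrow> 'f) \<Rightarrow> (nat \<Rightarrow> nat \<Rightarrow> 'f)"
    where "Psi f' = (\<lambda>c. if c \<in> ?D then f' (g c) else (\<lambda>_. 0))" for f'
  have gD: "g c \<in> ?D" if "c \<in> ?D" for c using g that by (meson bij_betwE)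
  have giD: "?gi c \<in> ?D" if "c \<in> ?D" for c using gi that by (meson bij_betwE)
  have gig: "?gi (g c) = c" if "c \<in> ?D" for c using g that by (meson bij_betw_inv_into_left)
  have ggi: "g (?gi c) = c" if "c \<in> ?D" for c using g that by (meson bij_betw_inv_into_right)
  have "bij_betw Phi (?V1) (?V2)"
  proof (rule bij_betw_byWitness[where f'=Psi])
    show "\<forall>a\<in>?V1. Psi (Phi a) = a"
    proof
      fix f' assume "f' \<in> ?V1"
      then have ext: "\<forall>c. c \<notin> ?D \<longrightarrow> f' c = (\<lambda>_. 0)" unfolding Valid_def by auto
      show "Psi (Phi f') = f'"
      proof
        fix c show "Psi (Phi f') c = f' c"
          unfolding Psi_def Phi_def using ext gD gig by auto
      qed
    qed
    show "\<forall>a\<in>?V2. Phi (Psi a) = a"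
    proof
      fix f' assume "f' \<in> ?V2"
      then have ext: "\<forall>c. c \<notin> ?D \<longrightarrow> f' c = (\<lambda>_. 0)" unfolding Valid_def by auto
      show "Phi (Psi f') = f'"
      proof
        fix c show "Phi (Psi f') c = f' c"
          unfolding Psi_def Phi_def using ext giD ggi by auto
      qed
    qed
    show "Phi ` ?V1 \<subseteq> ?V2"
    proof
      fix y assume "y \<in> Phi ` ?V1"
      then obtain f' where f': "f' \<in> ?V1" and y: "y = Phi f'" by auto
      have b: "bij_betw f' ?D (vecs (Suc d))" using f' unfolding Valid_def by auto
      have "bij_betw (f' \<circ> ?gi) ?D (vecs (Suc d))" using gi b by (rule bij_betw_trans)
      then have "bij_betw y ?D (vecs (Suc d))"
        by (rule bij_betw_cong[THEN iffD1, rotated]) (auto simp: y Phi_def)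
      moreover have "y ` act g H 0 = f' ` H 0"
      proof -
        have "y ` act g H 0 = (\<lambda>c. y (g c)) ` H 0" unfolding act_def by (simp add: image_image)
        also have "\<dots> = f' ` H 0"
        proof (rule image_cong[OF refl])
          fix c assume "c \<in> H 0"
          then have "c \<in> ?D" using H0 by blast
          then show "y (g c) = f' c" unfolding y Phi_def using gD gig by simp
        qed
        finally show ?thesis .
      qed
      ultimately show "y \<in> ?V2"
        using f' unfolding Valid_def by (auto simp: y Phi_def)
    qed
    show "Psi ` ?V2 \<subseteq> ?V1"
    proof
      fix y assume "y \<in> Psi ` ?V2"
      then obtain f' where f': "f' \<in> ?V2" and y: "y = Psi f'" by auto
      have b: "bij_betw f' ?D (vecs (Suc d))" using f' unfolding Valid_def by auto
      have "bij_betw (f' \<circ> g) ?D (vecs (Suc d))" using g b by (rule bij_betw_trans)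
      then have "bij_betw y ?D (vecs (Suc d))"
        by (rule bij_betw_cong[THEN iffD1, rotated]) (auto simp: y Psi_def)
      moreover have "y ` H 0 = f' ` act g H 0"
      proof -
        have "f' ` act g H 0 = (\<lambda>c. f' (g c)) ` H 0" unfolding act_def by (simp add: image_image)
        also have "\<dots> = y ` H 0"
        proof (rule image_cong[OF refl])
          fix c assume "c \<in> H 0"
          then have "c \<in> ?D" using H0 by blast
          then show "f' (g c) = y c" unfolding y Psi_def by simp
        qed
        finally show ?thesis by simp
      qed
      ultimately show "y \<in> ?V1"
        using f' unfolding Valid_def by (auto simp: y Psi_def)
    qed
  qed
  then have "card ?V1 = card ?V2" by (rule bij_betw_same_card)
  then show ?thesis by simp
qed




lemma count_sym:
  fixes W :: "(nat \<Rightarrow> nat set) \<Rightarrow> real"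
  assumes sym: "\<And>c'. c' \<in> deck m tau \<Longrightarrow> \<exists>g. bij_betw g (deck m tau) (deck m tau) \<and> g c = c'
                  \<and> (\<forall>H\<in>deals m tau. W (act g H) = W H)"
    and c: "c \<in> deck m tau" and P: "P \<le> m"
  shows "(\<Sum>H\<in>deals m tau. if c \<in> H P then W H else 0) * real (total m tau)
       = real (tau P) * (\<Sum>H\<in>deals m tau. W H)"
proof -
  define N where "N x = (\<Sum>H\<in>deals m tau. if x \<in> H P then W H else 0)" for x
  have eq: "N c' = N c" if c': "c' \<in> deck m tau" for c'
  proof -
    obtain g where g: "bij_betw g (deck m tau) (deck m tau)" and gc: "g c = c'"
      and W: "\<forall>H\<in>deals m tau. W (act g H) = W H" using sym[OF c'] by blast
    have b: "bij_betw (act g) (deals m tau) (deals m tau)" using g by (rule act_bij)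
    have inj: "inj_on g (deck m tau)" using g by (rule bij_betw_imp_inj_on)
    have "N c' = (\<Sum>H\<in>deals m tau. (\<lambda>H. if c' \<in> H P then W H else 0) (act g H))"
      unfolding N_def by (rule sum.reindex_bij_betw[OF b, symmetric])
    also have "\<dots> = N c" unfolding N_def
    proof (rule sum.cong[OF refl])
      fix H assume H: "H \<in> deals m tau"
      have sub: "H P \<subseteq> deck m tau" using H deal_sub[of m tau H P] unfolding deals_def by simp
      have "c' \<in> act g H P \<longleftrightarrow> c \<in> H P"
        unfolding act_def gc[symmetric] using inj sub c by (meson inj_on_image_mem_iff)
      then show "(if c' \<in> act g H P then W (act g H) else 0) = (if c \<in> H P then W H else 0)"
        using W H by simp
    qed
    finally show ?thesis .
  qed
  have "(\<Sum>x\<in>deck m tau. N x) = (\<Sum>H\<in>deals m tau. \<Sum>x\<in>deck m tau. if x \<in> H P then W H else 0)"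
    unfolding N_def by (rule sum.swap)
  also have "\<dots> = (\<Sum>H\<in>deals m tau. real (tau P) * W H)"
  proof (rule sum.cong[OF refl])
    fix H assume H: "H \<in> deals m tau"
    have sub: "H P \<subseteq> deck m tau" using H deal_sub[of m tau H P] unfolding deals_def by simp
    have cardH: "card (H P) = tau P" using H P unfolding deals_def is_deal_def by auto
    have "(\<Sum>x\<in>deck m tau. if x \<in> H P then W H else 0) = (\<Sum>x\<in>deck m tau \<inter> H P. W H)"
      by (rule sum.inter_restrict[symmetric]) (simp add: deck_def)
    also have "deck m tau \<inter> H P = H P" using sub by auto
    finally show "(\<Sum>x\<in>deck m tau. if x \<in> H P then W H else 0) = real (tau P) * W H"
      using cardH by simp
  qed
  also have "\<dots> = real (tau P) * (\<Sum>H\<in>deals m tau. W H)" by (rule sum_distrib_left[symmetric])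
  finally have s: "(\<Sum>x\<in>deck m tau. N x) = real (tau P) * (\<Sum>H\<in>deals m tau. W H)" .
  have "(\<Sum>x\<in>deck m tau. N x) = (\<Sum>x\<in>deck m tau. N c)" using eq by (rule sum.cong[OF refl])
  also have "\<dots> = real (total m tau) * N c" by (simp add: deck_def)
  finally show ?thesis using s unfolding N_def by (simp add: mult.commute)
qed

lemma finite_Pi:
  "finite (Pi_prot d m tau H \<sigma> :: 'f::{finite,field} token set)"
proof -
  have "Pi_prot d m tau H \<sigma> \<subseteq> (\<Union>e\<in>max_execs d m tau H. set e)"
    unfolding Pi_prot_def by (auto dest!: set_mono_prefix)
  moreover have "finite (max_execs d m tau H :: 'f token list set)"
    unfolding max_execs_eq by (intro finite_imageI finite_Valid)
  ultimately show ?thesis by (meson finite_UN_I finite_set finite_subset)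
qed

lemma run_prob_pos:
  assumes "is_execution d m tau H (\<rho> :: 'f::{finite,field} token list)"
  shows "run_prob d m tau H \<rho> > 0"
  unfolding run_prob_def
proof (rule prod_pos)
  fix k assume "k \<in> {..<length \<rho>}"
  then have mem: "\<rho> ! k \<in> Pi_prot d m tau H (take k \<rho>)" using assms unfolding is_execution_def by auto
  then have "card (Pi_prot d m tau H (take k \<rho>)) > 0" using finite_Pi card_gt_0_iff by blast
  then show "0 < (if \<rho> ! k \<in> Pi_prot d m tau H (take k \<rho>)
                  then 1 / real (card (Pi_prot d m tau H (take k \<rho>))) else 0)"
    using mem by simp
qed

lemma run_prob_nonneg: "run_prob d m tau H \<rho> \<ge> 0"
  unfolding run_prob_def by (intro prod_nonneg) auto




lemma tm_sym:
  fixes f :: "nat \<Rightarrow> nat \<Rightarrow> 'f::{finite,field}"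
  assumes fb: "bij_betw f (deck m tau) (vecs (Suc d))"
    and c: "c \<in> deck m tau" and c': "c' \<in> deck m tau"
  shows "\<exists>g. bij_betw g (deck m tau) (deck m tau) \<and> g c = c' \<and>
     (\<forall>H\<in>deals m tau. run_prob d m tau (act g H) (TMap f # rest) = run_prob d m tau H (TMap f # rest))"
proof -
  let ?D = "deck m tau"
  let ?vs = "vecs (Suc d) :: (nat \<Rightarrow> 'f) set"
  have fc: "f c \<in> ?vs" "f c' \<in> ?vs" using fb c c' by (auto dest: bij_betwE)
  obtain u s where u: "u \<in> vecs d" and us: "Tm d u s (f c) = f c'"
    using Tm_trans[OF fc] by blast
  let ?T = "Tm d u s"
  define g where "g x = (if x \<in> ?D then inv_into ?D f (?T (f x)) else x)" for x
  have Tb: "bij_betw ?T ?vs ?vs" by (rule Tm_bij)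
  have fi: "bij_betw (inv_into ?D f) ?vs ?D" using fb by (rule bij_betw_inv_into)
  have "bij_betw (inv_into ?D f \<circ> (?T \<circ> f)) ?D ?D"
    by (rule bij_betw_trans[OF bij_betw_trans[OF fb Tb] fi])
  then have gb: "bij_betw g ?D ?D"
    by (rule bij_betw_cong[THEN iffD1, rotated]) (simp add: g_def)
  have injf: "inj_on f ?D" using fb by (rule bij_betw_imp_inj_on)
  have fD: "f ` ?D = ?vs" using fb by (simp add: bij_betw_def)
  have fg: "f (g x) = ?T (f x)" if "x \<in> ?D" for x
  proof -
    have "f x \<in> ?vs" using fD that by blast
    then have "?T (f x) \<in> ?vs" by (rule Tm_vecs)
    then show ?thesis unfolding g_def using that fD by (simp add: f_inv_into_f)
  qed
  have gc: "g c = c'" unfolding g_def using c c' us injf by simp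
  have inv: "run_prob d m tau (act g H) (TMap f # rest) = run_prob d m tau H (TMap f # rest)"
    if H: "H \<in> deals m tau" for H
  proof -
    have Hd: "is_deal m tau H" using H unfolding deals_def by simp
    have sub: "H k \<subseteq> ?D" for k using deal_sub[OF Hd] .
    have img: "f ` act g H k = ?T ` f ` H k" for k
    proof -
      have "f ` act g H k = (\<lambda>x. f (g x)) ` H k" unfolding act_def by (simp add: image_image)
      also have "\<dots> = (\<lambda>x. ?T (f x)) ` H k"
        by (rule image_cong[OF refl]) (use sub fg in blast)
      finally show ?thesis by (simp add: image_image)
    qed
    define V where "V = ?vs - f ` H 0"
    have Vs: "V \<subseteq> ?vs" unfolding V_def by blast
    have fH0: "f ` H 0 \<subseteq> ?vs" using sub[of 0] fD by blast
    have Vg: "?vs - f ` act g H 0 = ?T ` V"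
    proof -
      have "?T ` V = ?T ` ?vs - ?T ` (f ` H 0)" unfolding V_def
        using Tb fH0 by (intro inj_on_image_set_diff[where C="?vs"]) (auto simp: bij_betw_def)
      also have "?T ` ?vs = ?vs" using Tb by (simp add: bij_betw_def)
      finally show ?thesis using img[of 0] by simp
    qed
    have validiff: "f \<in> Valid d m tau (act g H) \<longleftrightarrow> f \<in> Valid d m tau H"
      unfolding Valid_def using Vg transversal_Tm_iff[OF u Vs, of s] by (simp add: V_def)
    have exec_eq: "exec d m (act g H) f = exec d m H f" if fv: "f \<in> Valid d m tau H"
    proof -
      have tV: "transversal_hyperplane d V" using fv unfolding Valid_def V_def by simp
      have "proj_down d (?vs - f ` act g H 0) ` f ` act g H k = proj_down d V ` f ` H k"
        if k: "k \<in> set [1..<Suc m]" for k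
      proof -
        have inV: "w \<in> V" if w: "w \<in> f ` H k" for w
        proof -
          obtain x where x: "x \<in> H k" and wx: "w = f x" using w by blast
          have "1 \<le> k" "k \<le> m" using k by auto
          then have "H k \<inter> H 0 = {}" using Hd unfolding is_deal_def by (metis le_0_eq not_one_le_zero zero_le)
          moreover have "x \<in> ?D" using x sub by blast
          ultimately have "f x \<notin> f ` H 0" using x injf sub[of 0]
            by (metis disjoint_iff inj_on_image_mem_iff)
          moreover have "f x \<in> ?vs" using \<open>x \<in> ?D\<close> fD by blast
          ultimately show ?thesis unfolding V_def wx by blast
        qed
        have "proj_down d (?vs - f ` act g H 0) ` f ` act g H k
            = (\<lambda>w. proj_down d (?T ` V) (?T w)) ` f ` H k"
          unfolding Vg unfolding img by (simp add: image_image)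
        also have "\<dots> = proj_down d V ` f ` H k"
          by (rule image_cong[OF refl]) (use proj_down_Tm[OF u tV] inV in blast)
        finally show ?thesis .
      qed
      then show ?thesis unfolding exec_def V_def by (intro arg_cong[where f="Cons (TMap f)"] map_cong) auto
    qed
    have cardeq: "card (Valid d m tau (act g H) :: (nat \<Rightarrow> nat \<Rightarrow> 'f) set) = card (Valid d m tau H :: (nat \<Rightarrow> nat \<Rightarrow> 'f) set)"
      by (rule card_Valid_act[where H=H, OF gb sub[of 0]])
    show ?thesis
      unfolding run_prob_TMap using validiff exec_eq cardeq by auto
  qed
  show ?thesis using gb gc inv by blast
qed




theorem mainTheorem13:
  fixes tau :: "nat \<Rightarrow> nat" and m d c P :: nat
    and \<rho> :: "'f::{finite,field} token list"
  assumes "m > 1" and "CARD('f) > m" and "d > 0"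
    and "total m tau = CARD('f) ^ (d + 1)"
    and "tau 0 = CARD('f) ^ (d + 1) - CARD('f) ^ d"
    and "\<forall>k\<in>{1..m}. tau k > CARD('f) ^ (d - 1)"
    and "is_run d m tau \<rho>"
    and "c \<in> deck m tau" and "P \<le> m"
  shows "cond_prob d m tau (\<lambda>H. c \<in> H P) \<rho> = real (tau P) / real (total m tau)"
proof -
  obtain H0 where ex: "is_execution d m tau H0 \<rho>" using assms(7) unfolding is_run_def by blast
  have H0: "H0 \<in> deals m tau" using ex unfolding is_execution_def deals_def by simp
  define W where "W H = run_prob d m tau H \<rho>" for H
  have sym: "\<exists>g. bij_betw g (deck m tau) (deck m tau) \<and> g c = c'
                  \<and> (\<forall>H\<in>deals m tau. W (act g H) = W H)" if c': "c' \<in> deck m tau" for c'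
  proof (cases \<rho>)
    case Nil
    define g where "g x = (if x = c then c' else if x = c' then c else x)" for x
    have "bij_betw g (deck m tau) (deck m tau)"
      by (rule bij_betw_byWitness[where f'=g]) (use assms(8) c' in \<open>auto simp: g_def\<close>)
    moreover have "g c = c'" by (simp add: g_def)
    moreover have "W H = 1" for H unfolding W_def run_prob_def Nil by simp
    ultimately show ?thesis by auto
  next
    case (Cons a rest)
    have "\<rho> ! 0 \<in> Pi_prot d m tau H0 (take 0 \<rho>)" using ex Cons unfolding is_execution_def by auto
    then have "a \<in> TMap ` Valid d m tau H0" using Cons by (simp add: Pi_nil)
    then obtain f where f: "f \<in> Valid d m tau H0" and a: "a = TMap f" by blast
    have fb: "bij_betw f (deck m tau) (vecs (Suc d))" using f unfolding Valid_def by simp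
    show ?thesis using tm_sym[OF fb assms(8) c', of rest] unfolding W_def Cons a by simp
  qed
  have key: "(\<Sum>H\<in>deals m tau. if c \<in> H P then W H else 0) * real (total m tau)
       = real (tau P) * (\<Sum>H\<in>deals m tau. W H)"
    by (rule count_sym[OF sym assms(8) assms(9)])
  have pos: "W H0 > 0" unfolding W_def by (rule run_prob_pos[OF ex])
  have "W H0 \<le> (\<Sum>H\<in>deals m tau. W H)"
    by (rule member_le_sum[OF H0]) (auto simp: W_def run_prob_nonneg finite_deals)
  then have Dpos: "(\<Sum>H\<in>deals m tau. W H) > 0" using pos by linarith
  have tpos: "real (total m tau) > 0" using assms(8) unfolding deck_def by simp
  have cd: "real (card (deals m tau)) > 0" using H0 finite_deals card_gt_0_iff by force
  have "cond_prob d m tau (\<lambda>H. c \<in> H P) \<rho>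
      = (\<Sum>H\<in>deals m tau. if c \<in> H P then W H else 0) / (\<Sum>H\<in>deals m tau. W H)"
    unfolding cond_prob_def prob_event_def W_def using cd by simp
  also have "\<dots> = real (tau P) / real (total m tau)"
    using key Dpos tpos by (simp add: field_simps)
  finally show ?thesis .
qed


end
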